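(* Let $L$ be a finite simplicial complex and $H\subseteq L$ a hypergraph, with $\mathrm{Ext}=\Delta\gamma\delta\gamma$ and $\mathrm{Int}=\delta\gamma\Delta\gamma$. Let $r$ be the smallest non-negative integer with $\mathrm{Ext}^r(\gamma H)=L$ and $t$ the smallest non-negative integer with $\mathrm{Int}^t(H)=\emptyset$ (assuming both exist). Then $t\in\{r-1,r,r+1\}$.
   Context: $L$ is a finite collection of nonempty sets closed under nonempty subsets; hypergraphs in $L$ are subsets of $L$. $\Delta H=\{\sigma\in L:\exists\tau\in H,\sigma\subseteq\tau\}$, $\delta H=\{\sigma\in L:\text{every nonempty }\tau\subseteq\sigma\text{ lies in }H\}$, $\gamma H=L\setminus H$; $T^0$ is the identity. *)

theory Defs
  imports Main
begin

definition simplicial_complex :: "'a set set \<Rightarrow> bool" where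
  "simplicial_complex L \<longleftrightarrow> finite L \<and> {} \<notin> L \<and>
     (\<forall>\<sigma>\<in>L. \<forall>\<tau>. \<tau> \<noteq> {} \<and> \<tau> \<subseteq> \<sigma> \<longrightarrow> \<tau> \<in> L)"

definition Delta_op :: "'a set set \<Rightarrow> 'a set set \<Rightarrow> 'a set set" where
  "Delta_op L H = {\<sigma> \<in> L. \<exists>\<tau>\<in>H. \<sigma> \<subseteq> \<tau>}"

definition delta_op :: "'a set set \<Rightarrow> 'a set set \<Rightarrow> 'a set set" where
  "delta_op L H = {\<sigma> \<in> L. \<forall>\<tau>. \<tau> \<noteq> {} \<and> \<tau> \<subseteq> \<sigma> \<longrightarrow> \<tau> \<in> H}"

definition gamma_op :: "'a set set \<Rightarrow> 'a set set \<Rightarrow> 'a set set" where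
  "gamma_op L H = L - H"

definition Ext_op :: "'a set set \<Rightarrow> 'a set set \<Rightarrow> 'a set set" where
  "Ext_op L = Delta_op L \<circ> gamma_op L \<circ> delta_op L \<circ> gamma_op L"

definition Int_op :: "'a set set \<Rightarrow> 'a set set \<Rightarrow> 'a set set" where
  "Int_op L = delta_op L \<circ> gamma_op L \<circ> Delta_op L \<circ> gamma_op L"

end

theory Submission
  imports Defs
begin

definition Up :: "'a set set \<Rightarrow> 'a set set \<Rightarrow> 'a set set" where
  "Up L X = gamma_op L (delta_op L (gamma_op L X))"

lemma funpow_comp_shift: "((f \<circ> g) ^^ Suc k) x = f (((g \<circ> f) ^^ k) (g x))"
  by (induction k arbitrary: x) auto

lemma Ext_eq: "Ext_op L = Delta_op L \<circ> Up L"
  by (rule ext) (simp add: Ext_op_def Up_def)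

lemma mono_Delta: "mono (Delta_op L)"
  by (auto simp: mono_def Delta_op_def)

lemma mono_Up: "mono (Up L)"
  by (auto simp: mono_def Up_def gamma_op_def delta_op_def)

lemma Delta_sub: "Delta_op L X \<subseteq> L" by (auto simp: Delta_op_def)
lemma Up_sub: "Up L X \<subseteq> L" by (auto simp: Up_def gamma_op_def)

lemma Delta_ext: "X \<subseteq> L \<Longrightarrow> X \<subseteq> Delta_op L X" by (auto simp: Delta_op_def)

lemma Up_ext: "simplicial_complex L \<Longrightarrow> X \<subseteq> L \<Longrightarrow> X \<subseteq> Up L X"
  unfolding Up_def gamma_op_def delta_op_def simplicial_complex_def
  by (auto, metis subset_refl)

lemma Int_rel: "L - Int_op L Y = (Up L \<circ> Delta_op L) (L - Y)"
  by (auto simp: Int_op_def Up_def gamma_op_def delta_op_def)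

lemma Int_pow: "L - (Int_op L ^^ k) H = ((Up L \<circ> Delta_op L) ^^ k) (L - H)"
proof (induction k)
  case 0 then show ?case by simp
next
  case (Suc k)
  have "L - (Int_op L ^^ Suc k) H = (Up L \<circ> Delta_op L) (L - (Int_op L ^^ k) H)"
    using Int_rel by simp
  then show ?case using Suc by simp
qed

lemma Int_pow_sub: "H \<subseteq> L \<Longrightarrow> (Int_op L ^^ k) H \<subseteq> L"
  by (cases k) (auto simp: Int_op_def delta_op_def)

lemma mono_UD: "mono (Up L \<circ> Delta_op L)"
  by (intro monoI) (simp add: monoD[OF mono_Up] monoD[OF mono_Delta])
lemma mono_DU: "mono (Delta_op L \<circ> Up L)"
  by (intro monoI) (simp add: monoD[OF mono_Up] monoD[OF mono_Delta])

theorem corollary3p5: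
  fixes L H :: "'a set set" and r t :: nat
  assumes "simplicial_complex L" and "H \<subseteq> L"
    and "(Ext_op L ^^ r) (gamma_op L H) = L"
    and "\<forall>k<r. (Ext_op L ^^ k) (gamma_op L H) \<noteq> L"
    and "(Int_op L ^^ t) H = {}"
    and "\<forall>k<t. (Int_op L ^^ k) H \<noteq> {}"
  shows "int t \<in> {int r - 1, int r, int r + 1}"
proof -
  define X where "X = L - H"
  have XL: "X \<subseteq> L" by (auto simp: X_def)
  have E: "((Delta_op L \<circ> Up L) ^^ r) X = L"
    using assms(3) by (simp add: Ext_eq X_def gamma_op_def)
  have I: "((Up L \<circ> Delta_op L) ^^ t) X = L"
    using Int_pow[of L t H] assms(5) by (simp add: X_def)
  have t1: "t \<le> r + 1"
  proof (rule ccontr)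
    assume "\<not> t \<le> r + 1"
    hence ne: "(Int_op L ^^ Suc r) H \<noteq> {}" using assms(6) by (metis Suc_eq_plus1 not_le)
    have eq: "((Up L \<circ> Delta_op L) ^^ Suc r) X = Up L (((Delta_op L \<circ> Up L) ^^ r) (Delta_op L X))"
      by (rule funpow_comp_shift)
    have "Up L (((Delta_op L \<circ> Up L) ^^ r) X) \<subseteq> Up L (((Delta_op L \<circ> Up L) ^^ r) (Delta_op L X))"
      using mono_Up mono_DU Delta_ext[OF XL] by (meson funpow_mono monoD)
    hence "L \<subseteq> ((Up L \<circ> Delta_op L) ^^ Suc r) X"
      using E Up_ext[OF assms(1), of L] eq by simp
    hence "L - (Int_op L ^^ Suc r) H = L" using Int_pow[of L "Suc r" H] Up_sub
      by (auto simp: X_def funpow_comp_shift)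
    with Int_pow_sub[OF assms(2), of "Suc r"] ne show False by blast
  qed
  have r1: "r \<le> t + 1"
  proof (rule ccontr)
    assume "\<not> r \<le> t + 1"
    hence ne: "(Ext_op L ^^ Suc t) (gamma_op L H) \<noteq> L" using assms(4) by (metis Suc_eq_plus1 not_le)
    have sub: "((Up L \<circ> Delta_op L) ^^ t) (Up L X) \<subseteq> L"
      by (cases t) (auto simp: Up_sub)
    have "L = ((Up L \<circ> Delta_op L) ^^ t) X" using I by simp
    also have "\<dots> \<subseteq> ((Up L \<circ> Delta_op L) ^^ t) (Up L X)"
      using mono_UD Up_ext[OF assms(1) XL] by (meson funpow_mono)
    also have "\<dots> \<subseteq> Delta_op L (((Up L \<circ> Delta_op L) ^^ t) (Up L X))"
      using Delta_ext[OF sub] .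
    also have "\<dots> = ((Delta_op L \<circ> Up L) ^^ Suc t) X"
      by (rule funpow_comp_shift[symmetric])
    finally have "L \<subseteq> ((Delta_op L \<circ> Up L) ^^ Suc t) X" .
    moreover have "((Delta_op L \<circ> Up L) ^^ Suc t) X \<subseteq> L" by (simp add: Delta_sub)
    ultimately have "((Delta_op L \<circ> Up L) ^^ Suc t) X = L" by blast
    with ne show False by (simp add: Ext_eq X_def gamma_op_def)
  qed
  show ?thesis using t1 r1 by auto
qed

end
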